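(* Let $G$ be a finite group. If $o(G)<o(S_3)=\frac{13}{6}$, then $G$ is an elementary abelian $2$-group. Moreover, if $o(G)=\frac{13}{6}$, then $G\cong S_3$.
   Context: For a finite group $G$, $|x|$ denotes the order of an element $x$, $\psi(G)=\sum_{x\in G}|x|$, and $o(G)=\psi(G)/|G|$ (the average element order). $S_3$ is the symmetric group of degree $3$. *)

theory Defs
  imports "HOL-Algebra.Algebra"
begin

definition psi_ord :: "('a, 'b) monoid_scheme \<Rightarrow> nat" where
  "psi_ord G = (\<Sum>x\<in>carrier G. group.ord G x)"

definition avg_ord :: "('a, 'b) monoid_scheme \<Rightarrow> real" where
  "avg_ord G = real (psi_ord G) / real (order G)"

definition elem_abelian_2group :: "('a, 'b) monoid_scheme \<Rightarrow> bool" where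
  "elem_abelian_2group G \<longleftrightarrow> comm_group G \<and> (\<forall>x\<in>carrier G. x [^]\<^bsub>G\<^esub> (2::nat) = \<one>\<^bsub>G\<^esub>)"

end

theory Submission
  imports Defs
begin


context group begin

lemma pow2_eq: "x \<in> carrier G \<Longrightarrow> x [^] (2::nat) = x \<otimes> x"
  by (simp add: numeral_2_eq_2)

lemma pow3_eq: "x \<in> carrier G \<Longrightarrow> x [^] (3::nat) = x \<otimes> x \<otimes> x"
  by (simp add: numeral_3_eq_3)

lemma ord_2I: assumes "x \<in> carrier G" "x \<otimes> x = \<one>" "x \<noteq> \<one>" shows "ord x = 2"
proof -
  have "ord x dvd 2" using assms pow_eq_id[of x 2] pow2_eq by simp
  moreover have "ord x \<noteq> 1" using assms ord_eq_1 by simp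
  moreover have "ord x \<noteq> 0" using calculation(1) by (intro notI) simp
  moreover have "ord x \<le> 2" using calculation(1) by (simp add: dvd_imp_le)
  ultimately show ?thesis by linarith
qed

lemma ord_3I: assumes "x \<in> carrier G" "x \<otimes> x \<otimes> x = \<one>" "x \<noteq> \<one>" shows "ord x = 3"
proof -
  have "ord x dvd 3" using assms pow_eq_id[of x 3] pow3_eq by simp
  moreover have "ord x \<noteq> 1" using assms ord_eq_1 by simp
  moreover have "ord x \<noteq> 0" using calculation(1) by (intro notI) simp
  moreover have "ord x \<le> 3" using calculation(1) by (simp add: dvd_imp_le)
  moreover have "ord x \<noteq> 2" using calculation(1) by auto
  ultimately show ?thesis by linarith
qed

lemma inv_self: assumes "x \<in> carrier G" "x \<otimes> x = \<one>" shows "inv x = x"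
  using assms inv_equality by blast

lemma half_subgroup:
  assumes fin: "finite (carrier G)" and H: "subgroup H G" and big: "order G < 2 * card H"
  shows "H = carrier G"
proof -
  have lag: "card (rcosets H) * card H = order G" using lagrange[OF H] .
  have sub: "H \<subseteq> carrier G" using H subgroup.subset by blast
  have "card H > 0" using big by simp
  have "card (rcosets H) = 1"
  proof (rule ccontr)
    assume "card (rcosets H) \<noteq> 1"
    then have "card (rcosets H) = 0 \<or> card (rcosets H) \<ge> 2" by arith
    then show False
    proof
      assume "card (rcosets H) = 0"
      then have "order G = 0" using lag by simp
      then show False using big \<open>card H > 0\<close> fin sub card_mono[OF fin sub] by (simp add: order_def)
    next
      assume "card (rcosets H) \<ge> 2"
      then have "2 * card H \<le> card (rcosets H) * card H" by simp
      then show False using lag big by linarith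
    qed
  qed
  then have "card H = card (carrier G)" using lag by (simp add: order_def)
  then show ?thesis using card_subset_eq[OF fin sub] by simp
qed

lemma exp2_comm: assumes "\<And>x. x \<in> carrier G \<Longrightarrow> x \<otimes> x = \<one>" shows "comm_group G"
proof (rule group_comm_groupI)
  fix x y assume xy: "x \<in> carrier G" "y \<in> carrier G"
  have "x \<otimes> y = inv (x \<otimes> y)" using inv_self[of "x \<otimes> y"] assms xy by simp
  also have "\<dots> = inv y \<otimes> inv x" using xy by (simp add: inv_mult_group)
  also have "\<dots> = y \<otimes> x" using xy assms inv_self by simp
  finally show "x \<otimes> y = y \<otimes> x" .
qed

end


context group begin

lemma centralizer_subgroup:
  assumes x: "x \<in> carrier G"
  shows "subgroup {y \<in> carrier G. x \<otimes> y = y \<otimes> x} G"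
proof (rule subgroupI)
  show "{y \<in> carrier G. x \<otimes> y = y \<otimes> x} \<noteq> {}" using x by auto
next
  fix a assume a: "a \<in> {y \<in> carrier G. x \<otimes> y = y \<otimes> x}"
  then have ac: "a \<in> carrier G" and e: "x \<otimes> a = a \<otimes> x" by auto
  have "x \<otimes> inv a = inv a \<otimes> (a \<otimes> x) \<otimes> inv a" using ac x by (simp add: m_assoc[symmetric])
  also have "\<dots> = inv a \<otimes> x" using ac x e[symmetric] by (simp add: m_assoc)
  finally show "inv a \<in> {y \<in> carrier G. x \<otimes> y = y \<otimes> x}" using ac by simp
next
  fix a b assume "a \<in> {y \<in> carrier G. x \<otimes> y = y \<otimes> x}" "b \<in> {y \<in> carrier G. x \<otimes> y = y \<otimes> x}"
  then have ac: "a \<in> carrier G" "b \<in> carrier G" and e: "x \<otimes> a = a \<otimes> x" "x \<otimes> b = b \<otimes> x" by auto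
  have "x \<otimes> (a \<otimes> b) = (x \<otimes> a) \<otimes> b" using ac x by (simp add: m_assoc)
  also have "\<dots> = a \<otimes> (x \<otimes> b)" using ac x e(1) by (simp add: m_assoc)
  also have "\<dots> = a \<otimes> (b \<otimes> x)" using e(2) by simp
  also have "\<dots> = (a \<otimes> b) \<otimes> x" using ac x by (simp add: m_assoc)
  finally show "a \<otimes> b \<in> {y \<in> carrier G. x \<otimes> y = y \<otimes> x}" using ac by simp
qed (auto)

lemma three_quarters:
  assumes fin: "finite (carrier G)"
    and big: "3 * order G < 4 * card {x \<in> carrier G. x \<otimes> x = \<one>}"
  shows "\<forall>x\<in>carrier G. x \<otimes> x = \<one>"
proof -
  define S where "S = {x \<in> carrier G. x \<otimes> x = \<one>}"
  have Ssub: "S \<subseteq> carrier G" unfolding S_def by auto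
  have finS: "finite S" using fin Ssub finite_subset by blast
  have central: "x \<otimes> y = y \<otimes> x" if xS: "x \<in> S" and y: "y \<in> carrier G" for x y
  proof -
    have x: "x \<in> carrier G" "x \<otimes> x = \<one>" using xS unfolding S_def by auto
    define Z where "Z = {y \<in> carrier G. x \<otimes> y \<in> S}"
    have Zsub: "Z \<subseteq> carrier G" unfolding Z_def by auto
    have finZ: "finite Z" using fin Zsub finite_subset by blast
    have "bij_betw (\<lambda>y. x \<otimes> y) Z S"
    proof (rule bij_betw_byWitness[where f' = "\<lambda>s. inv x \<otimes> s"])
      show "\<forall>a\<in>Z. inv x \<otimes> (x \<otimes> a) = a" using x unfolding Z_def by (auto simp: m_assoc[symmetric])
      show "\<forall>a'\<in>S. x \<otimes> (inv x \<otimes> a') = a'" using x Ssub by (auto simp: m_assoc[symmetric])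
      show "(\<otimes>) x ` Z \<subseteq> S" unfolding Z_def by auto
      show "(\<lambda>s. inv x \<otimes> s) ` S \<subseteq> Z" using x Ssub unfolding Z_def by (auto simp: m_assoc[symmetric])
    qed
    then have cZ: "card Z = card S" by (rule bij_betw_same_card)
    have "card (S \<union> Z) \<le> order G" unfolding order_def using Ssub Zsub fin by (intro card_mono) auto
    then have cI: "2 * card S \<le> order G + card (S \<inter> Z)" using card_Un_Int[OF finS finZ] cZ by linarith
    define C where "C = {y \<in> carrier G. x \<otimes> y = y \<otimes> x}"
    have subC: "subgroup C G" unfolding C_def using centralizer_subgroup x by simp
    have "S \<inter> Z \<subseteq> C"
    proof
      fix z assume z: "z \<in> S \<inter> Z"
      then have zc: "z \<in> carrier G" "z \<otimes> z = \<one>" "x \<otimes> z \<in> carrier G" "(x \<otimes> z) \<otimes> (x \<otimes> z) = \<one>"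
        unfolding S_def Z_def by auto
      have "x \<otimes> z = inv (x \<otimes> z)" using inv_self[of "x \<otimes> z"] zc by simp
      also have "\<dots> = inv z \<otimes> inv x" using zc x by (simp add: inv_mult_group)
      also have "\<dots> = z \<otimes> x" using zc x inv_self by simp
      finally show "z \<in> C" unfolding C_def using zc by simp
    qed
    moreover have "finite C" unfolding C_def using fin by simp
    ultimately have "card (S \<inter> Z) \<le> card C" using card_mono by blast
    then have "order G < 2 * card C" using cI big unfolding S_def by linarith
    then have "C = carrier G" using half_subgroup[OF fin subC] by simp
    then show ?thesis using y unfolding C_def by auto
  qed
  have subS: "subgroup S G"
  proof (rule subgroupI)
    show "S \<subseteq> carrier G" by (rule Ssub)
    show "S \<noteq> {}" unfolding S_def by auto
    show "inv a \<in> S" if "a \<in> S" for a using that inv_self unfolding S_def by auto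
    show "a \<otimes> b \<in> S" if ab: "a \<in> S" "b \<in> S" for a b
    proof -
      have abc: "a \<in> carrier G" "b \<in> carrier G" "a \<otimes> a = \<one>" "b \<otimes> b = \<one>" using ab unfolding S_def by auto
      have "(a \<otimes> b) \<otimes> (a \<otimes> b) = a \<otimes> (b \<otimes> a) \<otimes> b" using abc by (simp add: m_assoc)
      also have "\<dots> = a \<otimes> (a \<otimes> b) \<otimes> b" using central[OF ab(2) abc(1)] by simp
      also have "\<dots> = \<one>" using abc by (simp add: m_assoc[symmetric])
      finally show ?thesis using abc unfolding S_def by simp
    qed
  qed
  have "order G < 2 * card S" using big unfolding S_def by linarith
  then have "S = carrier G" using half_subgroup[OF fin subS] by simp
  then show ?thesis unfolding S_def by auto
qed

end

lemma even_card_involution: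
  assumes "finite A" "\<And>x. x \<in> A \<Longrightarrow> f x \<in> A" "\<And>x. x \<in> A \<Longrightarrow> f (f x) = x" "\<And>x. x \<in> A \<Longrightarrow> f x \<noteq> x"
  shows "even (card A)"
  using assms
proof (induction "card A" arbitrary: A rule: less_induct)
  case less
  show ?case
  proof (cases "A = {}")
    case True then show ?thesis by simp
  next
    case False
    then obtain x where x: "x \<in> A" by auto
    define A' where "A' = A - {x, f x}"
    have fx: "f x \<in> A" "f x \<noteq> x" using less x by auto
    have cA: "card A' = card A - 2" unfolding A'_def using less(2) x fx by (simp add: card_Diff_subset)
    have "card A \<ge> 2"
    proof -
      have "{x, f x} \<subseteq> A" using x fx by auto
      then have "card {x, f x} \<le> card A" using less(2) card_mono by blast
      then show ?thesis using fx by simp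
    qed
    have "even (card A')"
    proof (rule less(1))
      show "card A' < card A" using cA \<open>card A \<ge> 2\<close> by simp
      show "finite A'" unfolding A'_def using less(2) by simp
      fix y assume y: "y \<in> A'"
      then have yA: "y \<in> A" "y \<noteq> x" "y \<noteq> f x" unfolding A'_def by auto
      show "f y \<in> A'" unfolding A'_def using yA less(3,4)[of y] less(4)[of x] x by auto
      show "f (f y) = y" using less(4) yA by simp
      show "f y \<noteq> y" using less(5) yA by simp
    qed
    then show ?thesis using cA \<open>card A \<ge> 2\<close> by (simp add: even_diff_nat)
  qed
qed



lemma arith_core:
  fixes n s r Q P :: nat
  assumes "1 \<le> s" "s + r = n" "4*s \<le> 3*n" "even r" "1 \<le> r" "2 \<le> s \<longrightarrow> even n"
    "3*r \<le> Q" "\<not> 3 dvd n \<longrightarrow> 4*r \<le> Q" "\<not> 3 dvd n \<and> \<not> 4 dvd n \<longrightarrow> 5*r \<le> Q"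
    "P + 1 = 2*s + Q"
  shows "13 * n \<le> 6 * P \<and> (13 * n = 6 * P \<longrightarrow> n = 6 \<and> s = 4 \<and> Q = 3*r)"
proof (cases "n \<ge> 12")
  case True
  have a: "13 * n \<le> 6 * P" using True assms(1,2,3,7,10) by linarith
  have b: False if "13 * n = 6 * P"
  proof -
    have "n = 12" "s = 9" using that True assms(1,2,3,7,10) by linarith+
    then have "r = 3" using assms(2) by simp
    then show False using assms(4) by simp
  qed
  show ?thesis using a b by blast
next
  case False
  then have "n \<le> 11" by simp
  then have "n=0\<or>n=1\<or>n=2\<or>n=3\<or>n=4\<or>n=5\<or>n=6\<or>n=7\<or>n=8\<or>n=9\<or>n=10\<or>n=11" by arith
  then show ?thesis
  proof (elim disjE)
  qed (use assms in \<open>auto; linarith\<close>)+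
qed

context group begin

lemma psi_split:
  assumes fin: "finite (carrier G)"
  shows "psi_ord G + 1 = 2 * card {x \<in> carrier G. x \<otimes> x = \<one>}
           + (\<Sum>x\<in>{x \<in> carrier G. x \<otimes> x \<noteq> \<one>}. ord x)"
proof -
  define S where "S = {x \<in> carrier G. x \<otimes> x = \<one>}"
  define R where "R = {x \<in> carrier G. x \<otimes> x \<noteq> \<one>}"
  have un: "carrier G = S \<union> R" and dis: "S \<inter> R = {}" unfolding S_def R_def by blast+
  have fS: "finite S" and fR: "finite R" using fin unfolding S_def R_def by auto
  have e1: "psi_ord G = sum ord S + sum ord R"
  proof -
    have "sum ord (carrier G) = sum ord (S \<union> R)" by (rule arg_cong[OF un])
    also have "\<dots> = sum ord S + sum ord R" by (rule sum.union_disjoint[OF fS fR dis])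
    finally show ?thesis by (simp add: psi_ord_def)
  qed
  have oneS: "\<one> \<in> S" unfolding S_def by simp
  have e2: "sum ord S = ord \<one> + sum ord (S - {\<one>})" using fS oneS by (rule sum.remove)
  have e3: "sum ord (S - {\<one>}) = sum (\<lambda>_. 2) (S - {\<one>})"
    by (rule sum.cong) (simp_all add: S_def ord_2I)
  have "card S > 0" using fS oneS card_gt_0_iff[of S] by blast
  then have e4: "card (S - {\<one>}) + 1 = card S" using fS oneS card_Diff_singleton[of \<one> S] by simp
  have "psi_ord G + 1 = 2 * card S + sum ord R" using e1 e2 e3 e4 by simp
  then show ?thesis unfolding S_def R_def .
qed

lemma R_ord_ge3:
  assumes fin: "finite (carrier G)" and x: "x \<in> carrier G" "x \<otimes> x \<noteq> \<one>"
  shows "3 \<le> ord x" "ord x dvd order G"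
proof -
  have "ord x \<ge> 1" using ord_ge_1[OF fin x(1)] .
  moreover have "ord x \<noteq> 1" using ord_eq_1 x by auto
  moreover have "ord x \<noteq> 2" using pow_eq_id[OF x(1), of 2] pow2_eq x by auto
  ultimately show "3 \<le> ord x" by linarith
  show "ord x dvd order G" using ord_dvd_group_order x by simp
qed

lemma main_ineq:
  assumes fin: "finite (carrier G)" and Rne: "{x \<in> carrier G. x \<otimes> x \<noteq> \<one>} \<noteq> {}"
  shows "13 * order G \<le> 6 * psi_ord G \<and>
    (13 * order G = 6 * psi_ord G \<longrightarrow> order G = 6 \<and> card {x \<in> carrier G. x \<otimes> x = \<one>} = 4
       \<and> (\<forall>x\<in>carrier G. x \<otimes> x \<noteq> \<one> \<longrightarrow> ord x = 3))"
proof -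
  define S where "S = {x \<in> carrier G. x \<otimes> x = \<one>}"
  define R where "R = {x \<in> carrier G. x \<otimes> x \<noteq> \<one>}"
  define Q where "Q = (\<Sum>x\<in>R. ord x)"
  have un: "carrier G = S \<union> R" and dis: "S \<inter> R = {}" unfolding S_def R_def by blast+
  have fS: "finite S" and fR: "finite R" using fin unfolding S_def R_def by auto
  have "\<one> \<in> S" unfolding S_def by simp
  then have "card S > 0" using fS card_gt_0_iff[of S] by blast
  then have c1: "1 \<le> card S" by simp
  have c2: "card S + card R = order G" unfolding order_def un using card_Un_disjoint[OF fS fR dis] by simp
  have c3: "4 * card S \<le> 3 * order G"
  proof (rule ccontr)
    assume "\<not> ?thesis"
    then have "3 * order G < 4 * card S" by simp
    then have "\<forall>x\<in>carrier G. x \<otimes> x = \<one>" using three_quarters[OF fin] unfolding S_def by blast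
    then show False using Rne by blast
  qed
  have c4: "even (card R)"
  proof (rule even_card_involution[where f = "\<lambda>y. inv y"])
    show "finite R" by (rule fR)
    fix x assume "x \<in> R"
    then have x: "x \<in> carrier G" "x \<otimes> x \<noteq> \<one>" unfolding R_def by auto
    have "inv x \<otimes> inv x \<noteq> \<one>"
    proof
      assume "inv x \<otimes> inv x = \<one>"
      then have "inv (x \<otimes> x) = \<one>" using x by (simp add: inv_mult_group)
      then have "x \<otimes> x = inv \<one>" using x by (metis inv_inv m_closed)
      then show False using x by simp
    qed
    then show "inv x \<in> R" using x unfolding R_def by simp
    show "inv (inv x) = x" using x by simp
    show "inv x \<noteq> x"
    proof
      assume "inv x = x"
      then have "x \<otimes> x = x \<otimes> inv x" by simp
      then show False using x by simp
    qed
  qed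
  have "card R > 0" using Rne fR card_gt_0_iff[of R] unfolding R_def by blast
  then have c5: "1 \<le> card R" by simp
  have c6: "2 \<le> card S \<longrightarrow> even (order G)"
  proof
    assume "2 \<le> card S"
    moreover have "S \<subseteq> {\<one>} \<Longrightarrow> card S \<le> 1" using card_mono[of "{\<one>}" S] by simp
    ultimately have "\<not> S \<subseteq> {\<one>}" by linarith
    then obtain x where "x \<in> S" "x \<noteq> \<one>" by auto
    then have "ord x = 2" "x \<in> carrier G" using ord_2I unfolding S_def by auto
    then show "even (order G)" using ord_dvd_group_order[of x] by simp
  qed
  have c7: "3 * card R \<le> Q" unfolding Q_def
    using sum_bounded_below[of R 3 ord] R_ord_ge3[OF fin] unfolding R_def by (simp add: mult.commute)
  have c8: "\<not> 3 dvd order G \<longrightarrow> 4 * card R \<le> Q"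
  proof
    assume n3: "\<not> 3 dvd order G"
    have "4 \<le> ord x" if "x \<in> R" for x
    proof -
      have "3 \<le> ord x" "ord x dvd order G" using R_ord_ge3[OF fin] that unfolding R_def by auto
      moreover have "ord x \<noteq> 3" using n3 calculation(2) by auto
      ultimately show ?thesis by linarith
    qed
    then show "4 * card R \<le> Q" unfolding Q_def using sum_bounded_below[of R 4 ord] by (simp add: mult.commute)
  qed
  have c9: "\<not> 3 dvd order G \<and> \<not> 4 dvd order G \<longrightarrow> 5 * card R \<le> Q"
  proof
    assume n3: "\<not> 3 dvd order G \<and> \<not> 4 dvd order G"
    have "5 \<le> ord x" if "x \<in> R" for x
    proof -
      have "3 \<le> ord x" "ord x dvd order G" using R_ord_ge3[OF fin] that unfolding R_def by auto
      then have "ord x \<noteq> 3" "ord x \<noteq> 4" using n3 by auto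
      then show ?thesis using \<open>3 \<le> ord x\<close> by linarith
    qed
    then show "5 * card R \<le> Q" unfolding Q_def using sum_bounded_below[of R 5 ord] by (simp add: mult.commute)
  qed
  have c10: "psi_ord G + 1 = 2 * card S + Q" using psi_split[OF fin] unfolding S_def Q_def R_def .
  have A: "13 * order G \<le> 6 * psi_ord G \<and> (13 * order G = 6 * psi_ord G \<longrightarrow> order G = 6 \<and> card S = 4 \<and> Q = 3 * card R)"
    by (rule arith_core[OF c1 c2 c3 c4 c5 c6 c7 c8 c9 c10])
  have B: "ord x = 3" if Qe: "Q = 3 * card R" and x: "x \<in> R" for x
  proof (rule ccontr)
    assume ne: "ord x \<noteq> 3"
    have x3: "3 \<le> ord x" using R_ord_ge3[OF fin] x unfolding R_def by auto
    have "3 * card (R - {x}) \<le> sum ord (R - {x})"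
      using sum_bounded_below[of "R - {x}" 3 ord] R_ord_ge3[OF fin] unfolding R_def by (simp add: mult.commute)
    moreover have "Q = ord x + sum ord (R - {x})" unfolding Q_def using fR x by (simp add: sum.remove)
    moreover have "card (R - {x}) = card R - 1" using fR x by (simp add: card_Diff_singleton)
    moreover note c5
    ultimately show False using Qe ne x3 by linarith
  qed
  show ?thesis using A B unfolding S_def R_def by blast
qed

end


context group begin

lemma klein_contra:
  assumes fin: "finite (carrier G)" and o6: "order G = 6"
    and z: "z \<in> carrier G" "z \<otimes> z = \<one>" "z \<noteq> \<one>"
    and t: "t \<in> carrier G" "t \<otimes> t = \<one>" "t \<noteq> \<one>" "t \<noteq> z"
    and c: "z \<otimes> t = t \<otimes> z"
  shows False
proof -
  define w where "w = z \<otimes> t"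
  have wc: "w \<in> carrier G" unfolding w_def using z t by simp
  have p1: "z \<otimes> w = t" unfolding w_def using z t by (simp add: m_assoc[symmetric])
  have p2: "w \<otimes> z = t" unfolding w_def using z t c by (simp add: m_assoc)
  have p3: "t \<otimes> w = z" unfolding w_def using z t c by (simp add: m_assoc[symmetric])
  have p4: "w \<otimes> t = z" unfolding w_def using z t by (simp add: m_assoc)
  have p5: "w \<otimes> w = \<one>"
  proof -
    have "w \<otimes> w = z \<otimes> (t \<otimes> z) \<otimes> t" unfolding w_def using z t by (simp add: m_assoc)
    also have "\<dots> = z \<otimes> (z \<otimes> t) \<otimes> t" using c by simp
    also have "\<dots> = \<one>" using z t by (simp add: m_assoc)
    finally show ?thesis .
  qed
  have p6: "t \<otimes> z = w" unfolding w_def using c by simp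
  have wn: "w \<noteq> \<one>" "w \<noteq> z" "w \<noteq> t"
  proof -
    show "w \<noteq> \<one>" proof assume "w = \<one>" then have "t = z" using p1 z by simp then show False using t by simp qed
    show "w \<noteq> z" proof assume "w = z" then have "t = \<one>" using p1 z by simp then show False using t by simp qed
    show "w \<noteq> t" proof assume "w = t" then have "z = \<one>" using p4 t by simp then show False using z by simp qed
  qed
  define H where "H = {\<one>, z, t, w}"
  have sub: "subgroup H G"
  proof (rule subgroupI)
    show "H \<subseteq> carrier G" unfolding H_def using z t wc by auto
    show "H \<noteq> {}" unfolding H_def by auto
    show "inv a \<in> H" if "a \<in> H" for a
      using that z t wc p5 inv_self unfolding H_def by auto
    show "a \<otimes> b \<in> H" if "a \<in> H" "b \<in> H" for a b
    proof -
      have "a = \<one> \<or> a = z \<or> a = t \<or> a = w" "b = \<one> \<or> b = z \<or> b = t \<or> b = w"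
        using that unfolding H_def by auto
      then show ?thesis unfolding H_def
        by (elim disjE) (simp_all add: z t wc p1 p2 p3 p4 p5 p6 w_def[symmetric])
    qed
  qed
  have "card H = 4" unfolding H_def using z t wn by auto
  then have "card (rcosets H) * 4 = 6" using lagrange[OF sub] o6 by simp
  then show False by presburger
qed

lemma order3_contra:
  assumes z: "z \<in> carrier G" "z \<otimes> z \<noteq> \<one>" "z \<otimes> z \<otimes> z = \<one>"
    and t: "t \<in> carrier G" "t \<otimes> t = \<one>" "t \<noteq> \<one>"
    and c: "z \<otimes> t = t \<otimes> z"
    and w3: "(z \<otimes> t) \<otimes> (z \<otimes> t) \<noteq> \<one> \<Longrightarrow> (z \<otimes> t) \<otimes> (z \<otimes> t) \<otimes> (z \<otimes> t) = \<one>"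
  shows False
proof -
  have a: "(z \<otimes> t) \<otimes> (z \<otimes> t) = z \<otimes> z"
  proof -
    have "(z \<otimes> t) \<otimes> (z \<otimes> t) = z \<otimes> (t \<otimes> z) \<otimes> t" using z t by (simp add: m_assoc)
    also have "\<dots> = z \<otimes> (z \<otimes> t) \<otimes> t" using c by simp
    also have "\<dots> = z \<otimes> z" using z t by (simp add: m_assoc)
    finally show ?thesis .
  qed
  have "(z \<otimes> t) \<otimes> (z \<otimes> t) \<otimes> (z \<otimes> t) = t"
    using a z t by (simp add: m_assoc[symmetric])
  then show False using w3 a z t by simp
qed

end


context group begin

lemma iso_S3:
  assumes fin: "finite (carrier G)" and o6: "order G = 6"
    and cS: "card {x \<in> carrier G. x \<otimes> x = \<one>} = 4"
    and o3: "\<forall>x\<in>carrier G. x \<otimes> x \<noteq> \<one> \<longrightarrow> ord x = 3"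
  shows "G \<cong> sym_group 3"
proof -
  define S where "S = {x \<in> carrier G. x \<otimes> x = \<one>}"
  define T where "T = {x \<in> carrier G. x \<otimes> x = \<one> \<and> x \<noteq> \<one>}"
  have TS: "T = S - {\<one>}" unfolding T_def S_def by blast
  have fS: "finite S" unfolding S_def using fin by simp
  have "\<one> \<in> S" unfolding S_def by simp
  then have cT: "card T = 3" unfolding TS using cS fS unfolding S_def[symmetric] by (simp add: card_Diff_singleton)
  then obtain t1 t2 t3 where T3: "T = {t1, t2, t3}" and d: "t1 \<noteq> t2" "t2 \<noteq> t3" "t1 \<noteq> t3"
    unfolding card_3_iff by blast
  have Tmem: "t \<in> carrier G" "t \<otimes> t = \<one>" "t \<noteq> \<one>" if "t \<in> T" for t using that unfolding T_def by auto
  have tT: "t1 \<in> T" "t2 \<in> T" "t3 \<in> T" using T3 by auto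
  have ord3: "x \<otimes> x \<otimes> x = \<one>" if "x \<in> carrier G" "x \<otimes> x \<noteq> \<one>" for x
    using o3 that pow_ord_eq_1[of x] pow3_eq[of x] by simp
  have ker: "z = \<one>" if z: "z \<in> carrier G" and cz: "\<And>t. t \<in> T \<Longrightarrow> z \<otimes> t = t \<otimes> z" for z
  proof (rule ccontr)
    assume zn: "z \<noteq> \<one>"
    show False
    proof (cases "z \<otimes> z = \<one>")
      case True
      then have "z \<in> T" unfolding T_def using z zn by simp
      then obtain t where "t \<in> T" "t \<noteq> z" using T3 d by auto
      then show False using klein_contra[OF fin o6 z True zn, of t] Tmem[of t] cz[of t] by auto
    next
      case False
      have "z \<otimes> t1 \<in> carrier G" using z Tmem[OF tT(1)] by simp
      then show False using order3_contra[OF z False ord3[OF z False], of t1] Tmem[OF tT(1)] cz[OF tT(1)] ord3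
        by blast
    qed
  qed
  define cj where "cj x t = x \<otimes> t \<otimes> inv x" for x t
  have cjT: "cj x t \<in> T" if x: "x \<in> carrier G" and t: "t \<in> T" for x t
  proof -
    have tc: "t \<in> carrier G" "t \<otimes> t = \<one>" "t \<noteq> \<one>" using Tmem[OF t] by auto
    have canc: "inv x \<otimes> (x \<otimes> u) = u" if "u \<in> carrier G" for u
      using x that by (simp add: m_assoc[symmetric])
    have "cj x t \<otimes> cj x t = x \<otimes> (t \<otimes> (t \<otimes> inv x))" unfolding cj_def using x tc by (simp add: m_assoc canc)
    also have "\<dots> = \<one>" using x tc by (simp add: m_assoc[symmetric])
    finally have a: "cj x t \<otimes> cj x t = \<one>" .
    have "cj x t \<noteq> \<one>"
    proof
      assume "cj x t = \<one>"
      moreover have "inv x \<otimes> cj x t \<otimes> x = t" unfolding cj_def using x tc by (simp add: m_assoc canc)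
      ultimately have "t = \<one>" using x by simp
      then show False using tc by simp
    qed
    moreover have "cj x t \<in> carrier G" unfolding cj_def using x tc by simp
    ultimately show ?thesis using a unfolding T_def by simp
  qed
  have cj_mult: "cj (x \<otimes> y) t = cj x (cj y t)" if "x \<in> carrier G" "y \<in> carrier G" "t \<in> carrier G" for x y t
    unfolding cj_def using that by (simp add: inv_mult_group m_assoc)
  define \<tau> :: "nat \<Rightarrow> 'a" where "\<tau> k = (if k = 1 then t1 else if k = 2 then t2 else t3)" for k
  define \<iota> :: "'a \<Rightarrow> nat" where "\<iota> t = (if t = t1 then 1 else if t = t2 then 2 else 3)" for t
  have \<tau>T: "\<tau> k \<in> T" for k unfolding \<tau>_def using tT by auto
  have \<iota>r: "\<iota> t \<in> {1..3}" for t unfolding \<iota>_def by auto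
  have \<iota>\<tau>: "\<iota> (\<tau> k) = k" if "k \<in> {1..3}" for k using that d unfolding \<iota>_def \<tau>_def by auto
  have \<tau>\<iota>: "\<tau> (\<iota> t) = t" if "t \<in> T" for t using that T3 unfolding \<iota>_def \<tau>_def by auto
  define \<phi> where "\<phi> x = (\<lambda>k. if k \<in> {1..3} then \<iota> (cj x (\<tau> k)) else k)" for x
  have \<phi>_mult: "\<phi> (x \<otimes> y) = \<phi> x \<circ> \<phi> y" if xy: "x \<in> carrier G" "y \<in> carrier G" for x y
  proof
    fix k
    show "\<phi> (x \<otimes> y) k = (\<phi> x \<circ> \<phi> y) k"
    proof (cases "k \<in> {1..3}")
      case True
      have "cj y (\<tau> k) \<in> T" using cjT[OF xy(2) \<tau>T] .
      then show ?thesis unfolding \<phi>_def using True \<iota>r \<tau>\<iota> cj_mult[OF xy Tmem(1)[OF \<tau>T]] by simp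
    next
      case False
      then show ?thesis unfolding \<phi>_def comp_def by (simp only: if_not_P[OF False] if_False)
    qed
  qed
  have \<phi>_one: "\<phi> \<one> = id"
  proof
    fix k show "\<phi> \<one> k = id k" unfolding \<phi>_def cj_def using \<iota>\<tau> Tmem(1)[OF \<tau>T] by simp
  qed
  have \<phi>_perm: "\<phi> x permutes {1..3}" if x: "x \<in> carrier G" for x
  proof -
    have A: "\<phi> x \<circ> \<phi> (inv x) = id" using \<phi>_mult[of x "inv x"] x \<phi>_one by simp
    have B: "\<phi> (inv x) \<circ> \<phi> x = id" using \<phi>_mult[of "inv x" x] x \<phi>_one by simp
    have "bij (\<phi> x)" by (rule o_bij[OF B A])
    then show ?thesis unfolding permutes_def bij_iff unfolding \<phi>_def by auto
  qed
  have hom: "\<phi> \<in> hom G (sym_group 3)"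
    unfolding hom_def using \<phi>_perm \<phi>_mult by (auto simp: sym_group_carrier sym_group_mult)
  have inj: "inj_on \<phi> (carrier G)"
  proof (rule inj_onI)
    fix x y assume x: "x \<in> carrier G" and y: "y \<in> carrier G" and e: "\<phi> x = \<phi> y"
    define z where "z = x \<otimes> inv y"
    have zc: "z \<in> carrier G" unfolding z_def using x y by simp
    have "\<phi> z = \<phi> y \<circ> \<phi> (inv y)" unfolding z_def using \<phi>_mult x y e by simp
    also have "\<dots> = id" using \<phi>_mult[of y "inv y"] y \<phi>_one by simp
    finally have pz: "\<phi> z = id" .
    have "z \<otimes> t = t \<otimes> z" if t: "t \<in> T" for t
    proof -
      have k: "\<iota> t \<in> {1..3}" by (rule \<iota>r)
      have "\<iota> (cj z (\<tau> (\<iota> t))) = \<iota> t" using fun_cong[OF pz, of "\<iota> t"] k unfolding \<phi>_def by simp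
      then have "\<iota> (cj z t) = \<iota> t" using \<tau>\<iota>[OF t] by simp
      then have "cj z t = t" using \<tau>\<iota>[OF t] \<tau>\<iota>[OF cjT[OF zc t]] by metis
      then have "z \<otimes> t \<otimes> inv z \<otimes> z = t \<otimes> z" unfolding cj_def by simp
      then show ?thesis using zc Tmem(1)[OF t] by (simp add: m_assoc)
    qed
    then have "z = \<one>" using ker[OF zc] by blast
    then show "x = y" unfolding z_def using x y by (metis inv_closed inv_equality r_inv inv_inv)
  qed
  have cS3: "card (carrier (sym_group 3)) = 6"
    unfolding sym_group_def using card_permutations[of "{1..(3::nat)}" 3] by (simp add: fact_numeral)
  have sub: "\<phi> ` carrier G \<subseteq> carrier (sym_group 3)" using hom unfolding hom_def by auto
  have finS3: "finite (carrier (sym_group 3))" unfolding sym_group_def by (simp add: finite_permutations)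
  have "card (\<phi> ` carrier G) = 6" using card_image[OF inj] o6 unfolding order_def by simp
  then have "\<phi> ` carrier G = carrier (sym_group 3)" using card_subset_eq[OF finS3 sub] cS3 by simp
  then have "bij_betw \<phi> (carrier G) (carrier (sym_group 3))" using inj unfolding bij_betw_def by simp
  then have "\<phi> \<in> iso G (sym_group 3)" using hom unfolding iso_def by simp
  then show ?thesis unfolding is_iso_def by blast
qed

end


definition "sA12 = (\<lambda>k::nat. if k=1 then 2 else if k=2 then 1 else k)"
definition "sA13 = (\<lambda>k::nat. if k=1 then 3 else if k=3 then 1 else k)"
definition "sA23 = (\<lambda>k::nat. if k=2 then 3 else if k=3 then 2 else k)"
definition "sC1 = (\<lambda>k::nat. if k=1 then 2 else if k=2 then 3 else if k=3 then 1 else k)"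
definition "sC2 = (\<lambda>k::nat. if k=1 then 3 else if k=2 then 1 else if k=3 then 2 else k)"

lemma perm_of_inv:
  assumes "f \<circ> g = id" "g \<circ> f = id" "\<And>k. k \<notin> S \<Longrightarrow> f k = k"
  shows "f permutes S"
proof -
  have "bij f" by (rule o_bij[OF assms(2,1)])
  then show ?thesis unfolding permutes_def bij_iff using assms(3) by auto
qed

lemma S3_facts:
  "sA12 \<circ> sA12 = id" "sA13 \<circ> sA13 = id" "sA23 \<circ> sA23 = id"
  "sC1 \<circ> sC2 = id" "sC2 \<circ> sC1 = id" "sC1 \<circ> sC1 \<circ> sC1 = id" "sC2 \<circ> sC2 \<circ> sC2 = id"
  by (auto simp: fun_eq_iff sA12_def sA13_def sA23_def sC1_def sC2_def)

lemma S3_neq: "sA12 \<noteq> id" "sA13 \<noteq> id" "sA23 \<noteq> id" "sC1 \<noteq> id" "sC2 \<noteq> id"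
  by (auto simp: fun_eq_iff sA12_def sA13_def sA23_def sC1_def sC2_def dest: spec[of _ 1])

lemma S3_perm: "sA12 permutes {1..3}" "sA13 permutes {1..3}" "sA23 permutes {1..3}"
  "sC1 permutes {1..3}" "sC2 permutes {1..3}"
  by (rule perm_of_inv; (rule S3_facts)?; auto simp: sA12_def sA13_def sA23_def sC1_def sC2_def)+

lemma S3_carrier: "carrier (sym_group 3) = set [id, sA12, sA13, sA23, sC1, sC2]"
  and S3_distinct: "distinct [id, sA12, sA13, sA23, sC1, sC2]"
proof -
  have "distinct (map (\<lambda>p. (p 1, p 2, p (3::nat))) [id, sA12, sA13, sA23, sC1, sC2])"
    by (simp add: sA12_def sA13_def sA23_def sC1_def sC2_def)
  then show d: "distinct [id, sA12, sA13, sA23, sC1, sC2]" by (simp only: distinct_map)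
  have sub: "set [id, sA12, sA13, sA23, sC1, sC2] \<subseteq> carrier (sym_group 3)"
    using S3_perm permutes_id by (auto simp: sym_group_carrier)
  have cS3: "card (carrier (sym_group 3)) = 6"
    unfolding sym_group_def using card_permutations[of "{1..(3::nat)}" 3] by (simp add: fact_numeral)
  have fin: "finite (carrier (sym_group 3))" unfolding sym_group_def by (simp add: finite_permutations)
  have "card (set [id, sA12, sA13, sA23, sC1, sC2]) = 6" using distinct_card[OF d] by simp
  then show "carrier (sym_group 3) = set [id, sA12, sA13, sA23, sC1, sC2]"
    using card_subset_eq[OF fin sub] cS3 by simp
qed

lemma S3_avg: "avg_ord (sym_group 3) = 13 / 6"
proof -
  interpret S: group "sym_group 3" by (rule sym_group_is_group)
  have m: "x \<otimes>\<^bsub>sym_group 3\<^esub> y = x \<circ> y" for x y by (simp add: sym_group_mult)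
  have o: "\<one>\<^bsub>sym_group 3\<^esub> = id" by (simp add: sym_group_one)
  have c: "x \<in> carrier (sym_group 3)" if "x \<in> set [id, sA12, sA13, sA23, sC1, sC2]" for x
    using that S3_carrier by simp
  have o1: "S.ord id = 1" using S.ord_id o by simp
  have o2: "S.ord sA12 = 2" "S.ord sA13 = 2" "S.ord sA23 = 2"
    by (rule S.ord_2I; (rule c; simp)?; simp add: m o S3_facts S3_neq)+
  have o3: "S.ord sC1 = 3" "S.ord sC2 = 3"
    by (rule S.ord_3I; (rule c; simp)?; simp add: m o S3_facts S3_neq)+
  have "psi_ord (sym_group 3) = sum_list (map S.ord [id, sA12, sA13, sA23, sC1, sC2])"
    unfolding psi_ord_def S3_carrier by (simp only: sum_list_distinct_conv_sum_set[OF S3_distinct])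
  also have "\<dots> = 13" using o1 o2 o3 by simp
  finally have p: "psi_ord (sym_group 3) = 13" .
  have "order (sym_group 3) = 6" unfolding order_def S3_carrier using distinct_card[OF S3_distinct] by simp
  then show ?thesis unfolding avg_ord_def p by simp
qed



lemma (in group) main_aux:
  assumes fin: "finite (carrier G)"
  shows "(avg_ord G < 13 / 6 \<longrightarrow> elem_abelian_2group G)
    \<and> (avg_ord G = 13 / 6 \<longrightarrow> G \<cong> sym_group 3)"
proof -
  have npos: "order G > 0" unfolding order_def using fin card_gt_0_iff[of "carrier G"] by blast
  have avg: "avg_ord G = real (psi_ord G) / real (order G)" unfolding avg_ord_def ..
  have allsq: "(\<forall>x\<in>carrier G. x \<otimes> x = \<one>) \<Longrightarrow> psi_ord G + 1 = 2 * order G"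
  proof -
    assume A: "\<forall>x\<in>carrier G. x \<otimes> x = \<one>"
    have e1: "{x \<in> carrier G. x \<otimes> x = \<one>} = carrier G" using A by blast
    have e2: "{x \<in> carrier G. x \<otimes> x \<noteq> \<one>} = {}" using A by blast
    have "psi_ord G + 1 = 2 * card {x \<in> carrier G. x \<otimes> x = \<one>} + (\<Sum>x\<in>{x \<in> carrier G. x \<otimes> x \<noteq> \<one>}. ord x)"
      by (rule psi_split[OF fin])
    then show ?thesis unfolding e1 e2 order_def by simp
  qed
  have part2: "elem_abelian_2group G" if lt: "avg_ord G < 13 / 6"
  proof -
    have A: "\<forall>x\<in>carrier G. x \<otimes> x = \<one>"
    proof (rule ccontr)
      assume "\<not> (\<forall>x\<in>carrier G. x \<otimes> x = \<one>)"
      then have "{x \<in> carrier G. x \<otimes> x \<noteq> \<one>} \<noteq> {}" by blast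
      then have "13 * order G \<le> 6 * psi_ord G" using main_ineq[OF fin] by blast
      then have "13 * real (order G) \<le> 6 * real (psi_ord G)" by (metis of_nat_le_iff of_nat_mult of_nat_numeral)
      then have "13 / 6 \<le> avg_ord G" unfolding avg using npos by (simp add: field_simps)
      then show False using lt by simp
    qed
    have "comm_group G" using exp2_comm A by blast
    moreover have "\<forall>x\<in>carrier G. x [^] (2::nat) = \<one>" using A pow2_eq by simp
    ultimately show ?thesis unfolding elem_abelian_2group_def by simp
  qed
  have part3: "G \<cong> sym_group 3" if eq: "avg_ord G = 13 / 6"
  proof -
    have "6 * real (psi_ord G) = 13 * real (order G)" using eq npos unfolding avg by (simp add: field_simps)
    then have e: "13 * order G = 6 * psi_ord G" by (metis of_nat_eq_iff of_nat_mult of_nat_numeral)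
    have R: "{x \<in> carrier G. x \<otimes> x \<noteq> \<one>} \<noteq> {}"
    proof
      assume "{x \<in> carrier G. x \<otimes> x \<noteq> \<one>} = {}"
      then have "\<forall>x\<in>carrier G. x \<otimes> x = \<one>" by blast
      then have "psi_ord G + 1 = 2 * order G" by (rule allsq)
      then show False using e by linarith
    qed
    have "order G = 6 \<and> card {x \<in> carrier G. x \<otimes> x = \<one>} = 4 \<and> (\<forall>x\<in>carrier G. x \<otimes> x \<noteq> \<one> \<longrightarrow> ord x = 3)"
      using main_ineq[OF fin R] e by blast
    then show ?thesis using iso_S3[OF fin] by blast
  qed
  show ?thesis using part2 part3 by blast
qed

theorem theoremA:
  fixes G :: "('a, 'b) monoid_scheme"
  assumes "group G" and "finite (carrier G)"
  shows "avg_ord (sym_group 3) = 13 / 6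
    \<and> (avg_ord G < 13 / 6 \<longrightarrow> elem_abelian_2group G)
    \<and> (avg_ord G = 13 / 6 \<longrightarrow> G \<cong> sym_group 3)"
  using S3_avg group.main_aux[OF assms] by blast


end
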